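(* Let $q$ be a power of an odd prime and let $S_j=\{x\in\mathbb F_q^d: x_1^2+\cdots+x_d^2=j\}$ with $j\ne0$. Then: (1) if $d\ge2$ is even, $S_j$ contains an affine subspace $H$ with $|H|=q^{(d-2)/2}$; (2) if $d=4k+1$ ($k$ a positive integer) and $j$ is not a square, $S_j$ contains an affine subspace $H$ with $|H|=q^{(d-3)/2}$; (3) if $d=4k+1$ and $j$ is a square, $S_j$ contains an affine subspace $H$ with $|H|=q^{(d-1)/2}$; (4) if $d=4k-1$ ($k$ a positive integer) and $-j$ is not a square, $S_j$ contains an affine subspace $H$ with $|H|=q^{(d-3)/2}$; (5) if $d=4k-1$ and $-j$ is a square, $S_j$ contains an affine subspace $H$ with $|H|=q^{(d-1)/2}$.
   Context: Squares refer to squares in $\mathbb F_q^*$. *)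

theory Defs
  imports "HOL-Analysis.Analysis"
begin

definition fsubspace :: "('a::field ^ 'n) set \<Rightarrow> bool" where
  "fsubspace W \<longleftrightarrow> 0 \<in> W \<and> (\<forall>x\<in>W. \<forall>y\<in>W. x + y \<in> W)
     \<and> (\<forall>c::'a. \<forall>x\<in>W. (\<chi> i. c * x $ i) \<in> W)"

definition faffine_subspace :: "('a::field ^ 'n) set \<Rightarrow> bool" where
  "faffine_subspace H \<longleftrightarrow> (\<exists>v W. fsubspace W \<and> H = (\<lambda>w. v + w) ` W)"

definition fsphere :: "'a::field \<Rightarrow> ('a ^ 'n) set" where
  "fsphere j = {x. (\<Sum>i\<in>UNIV. (x $ i)^2) = j}"

definition nonzero_square :: "'a::field \<Rightarrow> bool" where
  "nonzero_square a \<longleftrightarrow> (\<exists>y. y \<noteq> 0 \<and> y^2 = a)"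

end

theory Submission
  imports Defs begin

definition blk :: "'a::field \<Rightarrow> 'a \<Rightarrow> nat \<Rightarrow> nat \<Rightarrow> (nat \<Rightarrow> 'a) \<Rightarrow> nat \<Rightarrow> 'a" where
"blk a b p off t k = (if k < p then 0 else
  (let i = (k-p) div 4; c = (k-p) mod 4; x = t(off+2*i); y = t(off+2*i+1) in
   if c = 0 then x else if c = 1 then y else if c = 2 then a*x+b*y else b*x - a*y))"

lemma blk_lt: "k < p \<Longrightarrow> blk a b p off t k = 0" by (simp add: blk_def)
lemma blk0: "blk a b p off t (p + 4*i) = t (off+2*i)" by (simp add: blk_def)
lemma blk1: "blk a b p off t (Suc (p + 4*i)) = t (off+2*i+1)"
proof -
  have "(Suc (p + 4*i) - p) = 4*i+1" by simp
  moreover have "(4*i+1) div 4 = i" "(4*i+1) mod 4 = 1" by presburger+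
  ultimately show ?thesis by (simp add: blk_def Let_def)
qed
lemma blk2: "blk a b p off t (Suc (Suc (p + 4*i))) = a*t (off+2*i) + b * t(off+2*i+1)"
proof -
  have "(Suc (Suc (p + 4*i)) - p) = 4*i+2" by simp
  moreover have "(4*i+2) div 4 = i" "(4*i+2) mod 4 = 2" by presburger+
  ultimately show ?thesis by (simp add: blk_def Let_def)
qed
lemma blk3: "blk a b p off t (Suc (Suc (Suc (p + 4*i)))) = b*t (off+2*i) - a * t(off+2*i+1)"
proof -
  have "(Suc (Suc (Suc (p + 4*i))) - p) = 4*i+3" by simp
  moreover have "(4*i+3) div 4 = i" "(4*i+3) mod 4 = 3" by presburger+
  ultimately show ?thesis by (simp add: blk_def Let_def)
qed

lemma blk_sum:
  fixes a b :: "'a::field"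
  assumes ab: "a^2 + b^2 = -1" and f: "\<forall>k\<ge>p. f k = 0"
  shows "(\<Sum>k<p+4*N. (f k + blk a b p off t k)^2) = (\<Sum>k<p. (f k)^2)"
proof (induction N)
  case 0
  then show ?case by (simp add: blk_lt)
next
  case (Suc N)
  have e: "p + 4*Suc N = Suc (Suc (Suc (Suc (p + 4*N))))" by simp
  define x where "x = t (off+2*N)"
  define y where "y = t (off+2*N+1)"
  have z: "x^2 + y^2 + (a*x+b*y)^2 + (b*x-a*y)^2 = 0"
  proof -
    have "x^2 + y^2 + (a*x+b*y)^2 + (b*x-a*y)^2 = (1 + (a^2+b^2)) * (x^2+y^2)"
      by (simp add: algebra_simps power2_eq_square)
    then show ?thesis using ab by simp
  qed
  have "(\<Sum>k<p+4*Suc N. (f k + blk a b p off t k)^2) = (\<Sum>k<p+4*N. (f k + blk a b p off t k)^2)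
     + (x^2 + y^2 + (a*x+b*y)^2 + (b*x-a*y)^2)"
    unfolding e sum.lessThan_Suc using f by (simp add: blk0 blk1 blk2 blk3 x_def y_def add.assoc)
  then show ?case using Suc z by simp
qed

lemma sq_sum:
  assumes fin: "finite (UNIV :: 'a::field set)" and odd: "odd (CARD('a))" and c: "c \<noteq> 0"
  shows "\<exists>x y::'a. x^2 + c*y^2 = z"
proof -
  define S where "S = (\<lambda>x::'a. x^2) ` UNIV"
  have fS: "finite S" using fin unfolding S_def by simp
  have "(UNIV::'a set) = (\<Union>s\<in>S. {x. x^2 = s})" unfolding S_def by auto
  hence "CARD('a) \<le> (\<Sum>s\<in>S. card {x. x^2 = s})" by (metis card_UN_le fS)
  also have "\<dots> \<le> (\<Sum>s\<in>S. 2)"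
  proof (rule sum_mono)
    fix s assume "s \<in> S"
    then obtain r where r: "s = r^2" unfolding S_def by auto
    have "{x. x^2 = s} \<subseteq> {r, -r}" using r by (auto simp: power2_eq_iff)
    hence "card {x. x^2 = s} \<le> card {r, -r}" by (intro card_mono) auto
    also have "\<dots> \<le> 2" by (simp add: card_insert_if)
    finally show "card {x. x^2 = s} \<le> 2" .
  qed
  finally have h1: "CARD('a) \<le> 2 * card S" by simp
  hence h2: "CARD('a) + 1 \<le> 2 * card S" using odd by presburger
  define A where "A = (\<lambda>w. z - c * w) ` S"
  have "inj_on (\<lambda>w. z - c * w) S" using c by (auto simp: inj_on_def)
  hence cA: "card A = card S" unfolding A_def by (simp add: card_image)
  have "S \<inter> A \<noteq> {}"
  proof
    assume "S \<inter> A = {}"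
    hence "card (S \<union> A) = card S + card A" using fS A_def by (simp add: card_Un_disjoint)
    moreover have "card (S \<union> A) \<le> CARD('a)" using fin by (simp add: card_mono)
    ultimately show False using h2 cA by simp
  qed
  then obtain w where "w \<in> S" "w \<in> A" by auto
  then obtain x y where "w = x^2" "w = z - c*y^2" unfolding S_def A_def by blast
  hence "x^2 + c*y^2 = z" by (simp add: algebra_simps)
  thus ?thesis by blast
qed


lemma main_construct:
  fixes v u :: "nat \<Rightarrow> 'a::field" and j a b :: 'a
  assumes fin: "finite (UNIV::'a set)"
   and d: "CARD('n) = p + 4*N"
   and off: "off \<le> 1"
   and u0: "off = 0 \<Longrightarrow> (\<forall>k. u k = 0)"
   and u1: "off = 1 \<Longrightarrow> u 0 = 1 \<and> p \<ge> 1"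
   and vu: "\<forall>k\<ge>p. v k = 0 \<and> u k = 0"
   and pre: "\<forall>s. (\<Sum>k<p. (v k + s * u k)^2) = j"
   and ab: "a^2+b^2 = -1"
  shows "\<exists>H::('a^'n) set. faffine_subspace H \<and> H \<subseteq> fsphere j \<and> card H = CARD('a)^(off + 2*N)"
proof -
  obtain e :: "'n \<Rightarrow> nat" where e: "bij_betw e UNIV {0..<CARD('n)}"
    using ex_bij_betw_finite_nat[of "UNIV::'n set"] by auto
  define R where "R = off + 2*N"
  define T where "T = {t::nat\<Rightarrow>'a. \<forall>r\<ge>R. t r = 0}"
  define L where "L t k = t 0 * u k + blk a b p off t k" for t k
  define Phi where "Phi f = (\<chi> i. f (e i))" for f :: "nat \<Rightarrow> 'a"
  define W where "W = (\<lambda>t. Phi (L t)) ` T"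
  define H where "H = (\<lambda>w. Phi v + w) ` W"
  have sumPhi: "(\<Sum>i\<in>UNIV. (Phi f $ i)^2) = (\<Sum>k<CARD('n). (f k)^2)" for f
    unfolding Phi_def using sum.reindex_bij_betw[OF e, of "\<lambda>k. (f k)^2"]
    by (simp add: atLeast0LessThan)
  have esurj: "\<exists>i. e i = k" if "k < CARD('n)" for k
  proof -
    have "k \<in> range e" using e that unfolding bij_betw_def by simp
    thus ?thesis by (metis imageE)
  qed
  have blk_add: "blk a b p off (\<lambda>r. t r + t' r) k = blk a b p off t k + blk a b p off t' k" for t t' k
    by (auto simp: blk_def Let_def algebra_simps)
  have blk_smul: "blk a b p off (\<lambda>r. c * t r) k = c * blk a b p off t k" for c t k
    by (auto simp: blk_def Let_def algebra_simps)
  have blk_zero: "blk a b p off (\<lambda>r. 0) k = 0" for k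
    by (auto simp: blk_def Let_def)
  have sph: "Phi v + Phi (L t) \<in> fsphere j" for t
  proof -
    have "Phi v + Phi (L t) = Phi (\<lambda>k. (v k + t 0 * u k) + blk a b p off t k)"
      unfolding Phi_def L_def by (simp add: vec_eq_iff algebra_simps)
    moreover have "(\<Sum>k<p+4*N. ((v k + t 0 * u k) + blk a b p off t k)^2) = (\<Sum>k<p. (v k + t 0 * u k)^2)"
      by (rule blk_sum[OF ab]) (use vu in simp)
    ultimately show ?thesis unfolding fsphere_def using sumPhi d pre by simp
  qed
  have sub: "fsubspace W"
    unfolding fsubspace_def
  proof (intro conjI ballI allI)
    have "(\<lambda>r. 0) \<in> T" unfolding T_def by simp
    moreover have "Phi (L (\<lambda>r. 0)) = 0" unfolding Phi_def L_def by (simp add: vec_eq_iff blk_zero)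
    ultimately show "0 \<in> W" unfolding W_def by force
  next
    fix x y assume "x \<in> W" "y \<in> W"
    then obtain t t' where tt: "t \<in> T" "t' \<in> T" "x = Phi (L t)" "y = Phi (L t')" unfolding W_def by auto
    have "(\<lambda>r. t r + t' r) \<in> T" using tt unfolding T_def by simp
    moreover have "Phi (L (\<lambda>r. t r + t' r)) = x + y"
      unfolding tt Phi_def L_def by (simp add: vec_eq_iff blk_add algebra_simps)
    ultimately show "x + y \<in> W" unfolding W_def by force
  next
    fix c :: 'a and x assume "x \<in> W"
    then obtain t where tt: "t \<in> T" "x = Phi (L t)" unfolding W_def by auto
    have "(\<lambda>r. c * t r) \<in> T" using tt unfolding T_def by simp
    moreover have "Phi (L (\<lambda>r. c * t r)) = (\<chi> i. c * x $ i)"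
      unfolding tt Phi_def L_def by (simp add: vec_eq_iff blk_smul algebra_simps)
    ultimately show "(\<chi> i. c * x $ i) \<in> W" unfolding W_def by force
  qed
  have piv: "\<exists>k<p+4*N. \<forall>t. L t k = t r" if "r < R" for r
  proof (cases "r < off")
    case True
    hence "off = 1" "r = 0" using off by auto
    with u1 have "u 0 = 1" "p \<ge> 1" by auto
    thus ?thesis using \<open>r = 0\<close> by (intro exI[of _ 0]) (simp add: L_def blk_lt)
  next
    case False
    define m where "m = r - off"
    have m: "m < 2*N" using that False unfolding m_def R_def by simp
    show ?thesis
    proof (cases "even m")
      case True
      define k where "k = p + 4*(m div 2)"
      have "k < p + 4*N" using m unfolding k_def by simp
      moreover have "off + 2*(m div 2) = r" using True False unfolding m_def by simp
      moreover have "\<forall>t. L t k = t r"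
        using vu \<open>off + 2*(m div 2) = r\<close> unfolding L_def k_def by (simp add: blk0)
      ultimately show ?thesis by blast
    next
      case odd: False
      define k where "k = Suc (p + 4*(m div 2))"
      have "k < p + 4*N" using m unfolding k_def by simp
      moreover have "off + 2*(m div 2) + 1 = r" using odd False unfolding m_def by presburger
      moreover have "\<forall>t. L t k = t r"
        using vu \<open>off + 2*(m div 2) + 1 = r\<close> unfolding L_def k_def by (simp add: blk1)
      ultimately show ?thesis by blast
    qed
  qed
  have inj: "inj_on (\<lambda>t. Phi v + Phi (L t)) T"
  proof (rule inj_onI)
    fix t t' assume tT: "t \<in> T" "t' \<in> T" and eq: "Phi v + Phi (L t) = Phi v + Phi (L t')"
    hence eq2: "Phi (L t) = Phi (L t')" by simp
    have agree: "L t k = L t' k" if kl: "k < p + 4*N" for k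
    proof -
      obtain i where "e i = k" using esurj[of k] kl d by auto
      thus ?thesis using eq2 unfolding Phi_def by (metis vec_lambda_beta)
    qed
    show "t = t'"
    proof
      fix r show "t r = t' r"
      proof (cases "r < R")
        case True
        then obtain k where "k < p+4*N" "\<forall>t. L t k = t r" using piv by blast
        thus ?thesis using agree by metis
      next
        case False thus ?thesis using tT unfolding T_def by simp
      qed
    qed
  qed
  have cT: "card T = CARD('a)^R"
  proof -
    have "bij_betw (\<lambda>t. restrict t {..<R}) T (PiE {..<R} (\<lambda>_. UNIV))"
    proof (rule bij_betwI[where g = "\<lambda>f r. if r < R then f r else 0"])
      show "(\<lambda>t. restrict t {..<R}) \<in> T \<rightarrow> PiE {..<R} (\<lambda>_. UNIV)" by auto
      show "(\<lambda>f r. if r < R then f r else 0) \<in> PiE {..<R} (\<lambda>_. UNIV) \<rightarrow> T" unfolding T_def by auto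
      show "\<And>x. x \<in> T \<Longrightarrow> (\<lambda>r. if r < R then restrict x {..<R} r else 0) = x"
        unfolding T_def by (auto simp: fun_eq_iff)
      show "\<And>y. y \<in> PiE {..<R} (\<lambda>_. UNIV) \<Longrightarrow> restrict (\<lambda>r. if r < R then y r else 0) {..<R} = y"
        by (auto simp: fun_eq_iff PiE_def extensional_def)
    qed
    hence "card T = card (PiE {..<R} (\<lambda>_. UNIV::'a set))" by (rule bij_betw_same_card)
    also have "\<dots> = CARD('a)^R" by (simp add: card_PiE)
    finally show ?thesis .
  qed
  have Heq: "H = (\<lambda>t. Phi v + Phi (L t)) ` T" unfolding H_def W_def by (simp add: image_image)
  show ?thesis
  proof (intro exI conjI)
    show "faffine_subspace H" unfolding faffine_subspace_def H_def using sub by blast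
    show "H \<subseteq> fsphere j" using sph Heq by auto
    show "card H = CARD('a)^(off + 2*N)" using Heq inj cT R_def by (simp add: card_image)
  qed
qed


definition lv :: "'a::zero list \<Rightarrow> nat \<Rightarrow> 'a" where
  "lv xs k = (if k < length xs then xs ! k else 0)"

theorem lemma1p13:
  fixes j :: "'a::field"
  assumes fin: "finite (UNIV :: 'a set)"
    and q_odd: "odd (CARD('a))"
    and j0: "j \<noteq> 0"
  shows
   "(even CARD('n) \<and> CARD('n) \<ge> 2 \<longrightarrow>
       (\<exists>H::('a ^ 'n) set. faffine_subspace H \<and> H \<subseteq> fsphere j
          \<and> card H = CARD('a) ^ ((CARD('n) - 2) div 2)))
  \<and> (\<forall>k::nat. k \<ge> 1 \<and> CARD('n) = 4*k+1 \<and> \<not> nonzero_square j \<longrightarrow>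
       (\<exists>H::('a ^ 'n) set. faffine_subspace H \<and> H \<subseteq> fsphere j
          \<and> card H = CARD('a) ^ ((CARD('n) - 3) div 2)))
  \<and> (\<forall>k::nat. k \<ge> 1 \<and> CARD('n) = 4*k+1 \<and> nonzero_square j \<longrightarrow>
       (\<exists>H::('a ^ 'n) set. faffine_subspace H \<and> H \<subseteq> fsphere j
          \<and> card H = CARD('a) ^ ((CARD('n) - 1) div 2)))
  \<and> (\<forall>k::nat. k \<ge> 1 \<and> CARD('n) = 4*k-1 \<and> \<not> nonzero_square (-j) \<longrightarrow>
       (\<exists>H::('a ^ 'n) set. faffine_subspace H \<and> H \<subseteq> fsphere j
          \<and> card H = CARD('a) ^ ((CARD('n) - 3) div 2)))
  \<and> (\<forall>k::nat. k \<ge> 1 \<and> CARD('n) = 4*k-1 \<and> nonzero_square (-j) \<longrightarrow>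
       (\<exists>H::('a ^ 'n) set. faffine_subspace H \<and> H \<subseteq> fsphere j
          \<and> card H = CARD('a) ^ ((CARD('n) - 1) div 2)))"
proof -
  obtain a b :: 'a where ab0: "a^2 + 1*b^2 = -1" using sq_sum[OF fin q_odd, of 1 "-1"] by auto
  hence ab: "a^2 + b^2 = -1" by simp
  obtain x y :: 'a where xy0: "x^2 + 1*y^2 = j" using sq_sum[OF fin q_odd, of 1 j] by auto
  hence xy: "x^2 + y^2 = j" by simp
  obtain be al :: 'a where ba0: "be^2 + (-1)*al^2 = j" using sq_sum[OF fin q_odd, of "-1" j] by auto
  hence ba: "be^2 - al^2 = j" by simp
  \<comment> \<open>prefix of length 2, no isotropic vector\<close>
  have P2: "\<exists>H::('a ^ 'n) set. faffine_subspace H \<and> H \<subseteq> fsphere j \<and> card H = CARD('a) ^ (0 + 2*N)"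
    if "CARD('n) = 2 + 4*N" for N
    by (rule main_construct[OF fin that, where v = "lv [x,y]" and u = "\<lambda>_. 0" and a = a and b = b])
       (use ab xy in \<open>auto simp: lv_def eval_nat_numeral\<close>)
  have P3: "\<exists>H::('a ^ 'n) set. faffine_subspace H \<and> H \<subseteq> fsphere j \<and> card H = CARD('a) ^ (0 + 2*N)"
    if "CARD('n) = 3 + 4*N" for N
    by (rule main_construct[OF fin that, where v = "lv [x,y,0]" and u = "\<lambda>_. 0" and a = a and b = b])
       (use ab xy in \<open>auto simp: lv_def eval_nat_numeral\<close>)
  have P1: "\<exists>H::('a ^ 'n) set. faffine_subspace H \<and> H \<subseteq> fsphere j \<and> card H = CARD('a) ^ (0 + 2*N)"
    if "CARD('n) = 1 + 4*N" "y'^2 = j" for N y'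
    by (rule main_construct[OF fin that(1), where v = "lv [y']" and u = "\<lambda>_. 0" and a = a and b = b])
       (use ab that(2) in \<open>auto simp: lv_def eval_nat_numeral\<close>)
  have Q4: "(\<Sum>k<4. (lv [0, al*b, -al*a, be] k + s * lv [1,a,b,0] k)^2) = j" for s
  proof -
    have "(\<Sum>k<4. (lv [0, al*b, -al*a, be] k + s * lv [1,a,b,0] k)^2)
      = s^2 * (1 + (a^2+b^2)) + al^2*(a^2+b^2) + be^2"
      by (simp add: lv_def eval_nat_numeral power2_eq_square algebra_simps)
    also have "\<dots> = j" using ab ba by simp
    finally show ?thesis .
  qed
  have P4: "\<exists>H::('a ^ 'n) set. faffine_subspace H \<and> H \<subseteq> fsphere j \<and> card H = CARD('a) ^ (1 + 2*N)"
    if "CARD('n) = 4 + 4*N" for N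
    by (rule main_construct[OF fin that, where v = "lv [0, al*b, -al*a, be]" and u = "lv [1,a,b,0]" and a = a and b = b])
       (use ab Q4 in \<open>auto simp: lv_def\<close>)
  have Q5: "(\<Sum>k<5. (lv [0, al*b, -al*a, be, 0] k + s * lv [1,a,b,0,0] k)^2) = j" for s
  proof -
    have "(\<Sum>k<5. (lv [0, al*b, -al*a, be, 0] k + s * lv [1,a,b,0,0] k)^2)
      = s^2 * (1 + (a^2+b^2)) + al^2*(a^2+b^2) + be^2"
      by (simp add: lv_def eval_nat_numeral power2_eq_square algebra_simps)
    also have "\<dots> = j" using ab ba by simp
    finally show ?thesis .
  qed
  have P5: "\<exists>H::('a ^ 'n) set. faffine_subspace H \<and> H \<subseteq> fsphere j \<and> card H = CARD('a) ^ (1 + 2*N)"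
    if "CARD('n) = 5 + 4*N" for N
    by (rule main_construct[OF fin that, where v = "lv [0, al*b, -al*a, be, 0]" and u = "lv [1,a,b,0,0]" and a = a and b = b])
       (use ab Q5 in \<open>auto simp: lv_def\<close>)
  have Q3: "(\<Sum>k<3. (lv [0, y'*b, -y'*a] k + s * lv [1,a,b] k)^2) = j" if "y'^2 = -j" for s y'
  proof -
    have "(\<Sum>k<3. (lv [0, y'*b, -y'*a] k + s * lv [1,a,b] k)^2)
      = s^2 * (1 + (a^2+b^2)) + y'^2*(a^2+b^2)"
      by (simp add: lv_def eval_nat_numeral power2_eq_square algebra_simps)
    also have "\<dots> = j" using ab that by simp
    finally show ?thesis .
  qed
  have P3b: "\<exists>H::('a ^ 'n) set. faffine_subspace H \<and> H \<subseteq> fsphere j \<and> card H = CARD('a) ^ (1 + 2*N)"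
    if "CARD('n) = 3 + 4*N" "y'^2 = -j" for N y'
    by (rule main_construct[OF fin that(1), where v = "lv [0, y'*b, -y'*a]" and u = "lv [1,a,b]" and a = a and b = b])
       (use ab Q3[OF that(2)] in \<open>auto simp: lv_def\<close>)
  show ?thesis
  proof (intro conjI allI impI)
    assume h: "even CARD('n) \<and> CARD('n) \<ge> 2"
    show "\<exists>H::('a ^ 'n) set. faffine_subspace H \<and> H \<subseteq> fsphere j \<and> card H = CARD('a) ^ ((CARD('n) - 2) div 2)"
    proof (cases "CARD('n) mod 4 = 2")
      case True
      define N where "N = CARD('n) div 4"
      have "CARD('n) = 2 + 4*N" "(CARD('n) - 2) div 2 = 0 + 2*N" using True unfolding N_def by presburger+
      thus ?thesis using P2 by metis
    next
      case False
      define N where "N = CARD('n) div 4 - 1"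
      have "CARD('n) = 4 + 4*N" "(CARD('n) - 2) div 2 = 1 + 2*N" using False h unfolding N_def by presburger+
      thus ?thesis using P4 by metis
    qed
  next
    fix k :: nat assume h: "k \<ge> 1 \<and> CARD('n) = 4*k+1 \<and> \<not> nonzero_square j"
    have "CARD('n) = 5 + 4*(k-1)" "(CARD('n) - 3) div 2 = 1 + 2*(k-1)" using h by auto
    thus "\<exists>H::('a ^ 'n) set. faffine_subspace H \<and> H \<subseteq> fsphere j \<and> card H = CARD('a) ^ ((CARD('n) - 3) div 2)"
      using P5 by metis
  next
    fix k :: nat assume h: "k \<ge> 1 \<and> CARD('n) = 4*k+1 \<and> nonzero_square j"
    then obtain y' where "y'^2 = j" unfolding nonzero_square_def by auto
    moreover have "CARD('n) = 1 + 4*k" "(CARD('n) - 1) div 2 = 0 + 2*k" using h by auto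
    ultimately show "\<exists>H::('a ^ 'n) set. faffine_subspace H \<and> H \<subseteq> fsphere j \<and> card H = CARD('a) ^ ((CARD('n) - 1) div 2)"
      using P1 by metis
  next
    fix k :: nat assume h: "k \<ge> 1 \<and> CARD('n) = 4*k-1 \<and> \<not> nonzero_square (-j)"
    have "CARD('n) = 3 + 4*(k-1)" "(CARD('n) - 3) div 2 = 0 + 2*(k-1)" using h by auto
    thus "\<exists>H::('a ^ 'n) set. faffine_subspace H \<and> H \<subseteq> fsphere j \<and> card H = CARD('a) ^ ((CARD('n) - 3) div 2)"
      using P3 by metis
  next
    fix k :: nat assume h: "k \<ge> 1 \<and> CARD('n) = 4*k-1 \<and> nonzero_square (-j)"
    then obtain y' where "y'^2 = -j" unfolding nonzero_square_def by auto
    moreover have "CARD('n) = 3 + 4*(k-1)" "(CARD('n) - 1) div 2 = 1 + 2*(k-1)" using h by auto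
    ultimately show "\<exists>H::('a ^ 'n) set. faffine_subspace H \<and> H \<subseteq> fsphere j \<and> card H = CARD('a) ^ ((CARD('n) - 1) div 2)"
      using P3b by metis
  qed
qed

end
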